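(* Let $r\ge 2$ be an integer and $0\le x<\pi$ real. Then $$\int_0^x \theta^{r-2}\log\left(\cos\frac\theta2\right)d\theta=\frac{x^{r-1}}{r-1}\log\left(\cos\frac x2\right)-\frac{(2\pi)^{r-1}}{r-1}\log\mathcal C_r\left(\frac x{2\pi}\right).$$
   Context: For an integer $r\ge2$ let $P_r(y)=(1-y)\exp\left(y+\frac{y^2}{2}+\cdots+\frac{y^r}{r}\right)$. The multiple cosine function of Kurokawa–Koyama of order $r\ge2$ is $\mathcal C_r(x)=\prod_{n\ge1,\ n\text{ odd}}\left\{P_r\left(\frac{x}{n/2}\right)P_r\left(-\frac{x}{n/2}\right)^{(-1)^{r-1}}\right\}^{(n/2)^{r-1}}$, interpreted as $\mathcal C_r(x)=\exp\Big(\sum_{n\ge1,\,n\text{ odd}}(n/2)^{r-1}\big[\operatorname{Log}P_r(2x/n)+(-1)^{r-1}\operatorname{Log}P_r(-2x/n)\big]\Big)$, where $\operatorname{Log}P_r(y):=\operatorname{Log}(1-y)+y+\frac{y^2}{2}+\cdots+\frac{y^r}{r}$ with $\operatorname{Log}$ the principal branch. The series converges and defines a holomorphic function on $D=\mathbb C\setminus\big((-\infty,-\tfrac12]\cup[\tfrac12,\infty)\big)$, positive on $(-\tfrac12,\tfrac12)$; $\log\mathcal C_r(x)$ denotes the exponent above (the real logarithm for real $|x|<\tfrac12$). *)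

theory Defs
  imports "HOL-Analysis.Analysis"
begin

definition LogP :: "nat \<Rightarrow> complex \<Rightarrow> complex" where
  "LogP r y = Ln (1 - y) + (\<Sum>k=1..r. y ^ k / of_nat k)"

definition logC :: "nat \<Rightarrow> complex \<Rightarrow> complex" where
  "logC r x = (\<Sum>m. (of_nat (2*m+1) / 2) ^ (r - 1) *
      (LogP r (2 * x / of_nat (2*m+1)) + (-1) ^ (r - 1) * LogP r (- 2 * x / of_nat (2*m+1))))"

end

theory Submission
  imports Defs
begin

lemma prod_split:
  fixes y :: real
  shows "(\<Prod>k=1..2*N. 1 - (2*y)^2/(real k)^2) =
     (\<Prod>m<N. 1 - 4*y^2/(real(2*m+1))^2) * (\<Prod>k=1..N. 1 - y^2/(real k)^2)"
proof (induction N)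
  case 0 then show ?case by simp
next
  case (Suc N)
  have e: "2 * Suc N = Suc (Suc (2*N))" by simp
  have "(\<Prod>k=1..2*Suc N. 1 - (2*y)^2/(real k)^2) =
     (\<Prod>k=1..2*N. 1 - (2*y)^2/(real k)^2) * (1 - (2*y)^2/(real (2*N+1))^2) * (1 - (2*y)^2/(real (2*N+2))^2)"
    unfolding e by (simp add: prod.cl_ivl_Suc)
  also have "(1 - (2*y)^2/(real (2*N+2))^2) = 1 - y^2/(real (Suc N))^2"
  proof -
    have "real (2*N+2) = 2 * real (Suc N)" by simp
    thus ?thesis by (simp only: power_mult_distrib) simp
  qed
  also have "(1 - (2*y)^2/(real (2*N+1))^2) = 1 - 4*y^2/(real(2*N+1))^2"
    by (simp add: power2_eq_square)
  finally have X: "(\<Prod>k=1..2*Suc N. 1 - (2*y)^2/(real k)^2) =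
     ((\<Prod>m<N. 1 - 4*y^2/(real(2*m+1))^2) * (\<Prod>k=1..N. 1 - y^2/(real k)^2)) *
     (1 - 4*y^2/(real(2*N+1))^2) * (1 - y^2/(real (Suc N))^2)"
    by (simp only: Suc.IH)
  have Y: "(\<Prod>m<Suc N. 1 - 4*y^2/(real(2*m+1))^2) = (\<Prod>m<N. 1 - 4*y^2/(real(2*m+1))^2) * (1 - 4*y^2/(real(2*N+1))^2)"
    by (rule prod.lessThan_Suc)
  have Z: "(\<Prod>k=1..Suc N. 1 - y^2/(real k)^2) = (\<Prod>k=1..N. 1 - y^2/(real k)^2) * (1 - y^2/(real (Suc N))^2)"
    by simp
  show ?case unfolding X Y Z by (simp only: mult_ac)
qed

lemma four_sq_less:
  fixes y :: real assumes "\<bar>y\<bar> < 1/2" shows "4*y^2 < 1"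
proof -
  have "(2*y)^2 < 1" using assms by (subst abs_square_less_1) simp
  thus ?thesis by (simp add: power_mult_distrib)
qed

lemma cos_prod:
  fixes y :: real
  assumes "\<bar>y\<bar> < 1/2"
  shows "(\<lambda>N. \<Prod>m<N. 1 - 4*y^2/(real(2*m+1))^2) \<longlonglongrightarrow> cos (pi*y)"
proof (cases "y = 0")
  case True then show ?thesis by simp
next
  case False
  define P where "P z N = (\<Prod>k=1..N. 1 - z^2/(real k)^2)" for z :: real and N
  have nz: "1 - y^2/(real k)^2 \<noteq> 0" if "1 \<le> k" for k :: nat
  proof -
    have k1: "real k \<ge> 1" using that by simp
    have "1 \<le> (real k)^2" using k1 by simp
    hence "y^2 < (real k)^2" using four_sq_less[OF assms] by linarith
    hence "y^2/(real k)^2 < 1" using k1 by (simp add: field_simps)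
    thus ?thesis by linarith
  qed
  have Pnz: "P y N \<noteq> 0" for N
    unfolding P_def by (subst prod_zero_iff) (use nz in auto)
  have s1: "sin (pi*y) \<noteq> 0"
  proof
    assume "sin (pi*y) = 0"
    then obtain n :: int where "pi * y = of_int n * pi" using sin_zero_iff_int2 by blast
    hence "y = of_int n" by simp
    with assms False show False by (cases n rule: int_cases3) auto
  qed
  have l1: "P y \<longlonglongrightarrow> sin (pi*y)/(pi*y)"
    unfolding P_def by (rule sin_product_formula_real') (use False in auto)
  have l2: "(\<lambda>N. P (2*y) (N*2)) \<longlonglongrightarrow> sin (pi*(2*y))/(pi*(2*y))"
    unfolding P_def by (rule LIMSEQ_linear[OF sin_product_formula_real']) (use False in auto)
  have "(\<lambda>N. P (2*y) (N*2) / P y N) \<longlonglongrightarrow> (sin (pi*(2*y))/(pi*(2*y))) / (sin (pi*y)/(pi*y))"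
    by (rule tendsto_divide[OF l2 l1]) (use False s1 in auto)
  also have "(sin (pi*(2*y))/(pi*(2*y))) / (sin (pi*y)/(pi*y)) = cos (pi*y)"
  proof -
    have "sin (pi*(2*y)) = 2 * sin (pi*y) * cos (pi*y)"
      using sin_double[of "pi*y"] by (simp add: mult_ac)
    thus ?thesis using False s1 by (simp add: field_simps)
  qed
  also have "(\<lambda>N. P (2*y) (N*2) / P y N) = (\<lambda>N. \<Prod>m<N. 1 - 4*y^2/(real(2*m+1))^2)"
  proof
    fix N show "P (2*y) (N*2) / P y N = (\<Prod>m<N. 1 - 4*y^2/(real(2*m+1))^2)"
      using prod_split[of y N] Pnz[of N] unfolding P_def by (simp add: mult.commute)
  qed
  finally show ?thesis .
qed

lemma ln_cos_sums:
  fixes y :: real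
  assumes "\<bar>y\<bar> < 1/2"
  shows "(\<lambda>m. ln (1 - 4*y^2/(real(2*m+1))^2)) sums ln (cos (pi*y))"
proof -
  have pos: "1 - 4*y^2/(real(2*m+1))^2 > 0" for m
  proof -
    have "4*y^2 < 1" using four_sq_less[OF assms] .
    also have "1 \<le> (real(2*m+1))^2" by simp
    finally show ?thesis by (simp add: field_simps)
  qed
  have cpos: "cos (pi*y) > 0"
  proof (rule cos_gt_zero_pi)
    have "-1/2 < y" "y < 1/2" using assms by auto
    have "pi * (-1/2) < pi * y" using \<open>-1/2 < y\<close> by (intro mult_strict_left_mono) auto
    moreover have "pi * y < pi * (1/2)" using \<open>y < 1/2\<close> by (intro mult_strict_left_mono) auto
    ultimately show "- (pi/2) < pi*y" "pi*y < pi/2" by simp_all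
  qed
  have "(\<lambda>N. ln (\<Prod>m<N. 1 - 4*y^2/(real(2*m+1))^2)) \<longlonglongrightarrow> ln (cos (pi*y))"
    by (rule tendsto_ln[OF cos_prod[OF assms]]) (use cpos in simp)
  moreover have "ln (\<Prod>m<N. 1 - 4*y^2/(real(2*m+1))^2) = (\<Sum>m<N. ln (1 - 4*y^2/(real(2*m+1))^2))" for N
  proof (rule ln_prod)
    show "finite {..<N}" by simp
    fix i show "1 - 4*y^2/(real(2*i+1))^2 \<noteq> 0" using pos[of i] by linarith
  qed
  ultimately show ?thesis unfolding sums_def by simp
qed

definition lp :: "nat \<Rightarrow> real \<Rightarrow> real" where
  "lp r u = ln (1 - u) + (\<Sum>k=1..r. u ^ k / real k)"

lemma lp_deriv:
  assumes "u < 1"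
  shows "(lp r has_real_derivative (-(u^r)/(1-u))) (at u)"
proof -
  have "(lp r has_real_derivative (-1/(1-u) + (\<Sum>k=1..r. real k * u^(k-1) / real k))) (at u)"
    unfolding lp_def using assms
    by (auto intro!: derivative_eq_intros simp: field_simps)
  also have "(\<Sum>k=1..r. real k * u^(k-1) / real k) = (\<Sum>k=1..r. u^(k-1))"
    by (intro sum.cong) auto
  also have "(\<Sum>k=1..r. u^(k-1)) = (\<Sum>i<r. u^i)"
    by (induction r) (simp_all add: sum.nat_ivl_Suc')
  also have "-1/(1-u) + (\<Sum>i<r. u^i) = -(u^r)/(1-u)"
    using one_diff_power_eq[of u r] assms by (simp add: field_simps)
  finally show ?thesis .
qed

lemma lp_deriv_chain [derivative_intros]:
  assumes "(g has_real_derivative g') (at x within s)" "g x < 1"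
  shows "((\<lambda>x. lp r (g x)) has_real_derivative (- ((g x) ^ r) / (1 - g x) * g')) (at x within s)"
  by (rule DERIV_chain2[OF lp_deriv[OF assms(2)] assms(1)])

definition ell :: "nat \<Rightarrow> real \<Rightarrow> real" where
  "ell m y = ln (1 - 4*y^2/(real(2*m+1))^2)"
definition ell' :: "nat \<Rightarrow> real \<Rightarrow> real" where
  "ell' m y = -8*y/((real(2*m+1))^2 - 4*y^2)"
definition ct :: "nat \<Rightarrow> nat \<Rightarrow> real \<Rightarrow> real" where
  "ct r m y = (real(2*m+1)/2)^(r-1) * (lp r (2*y/real(2*m+1)) + (-1)^(r-1) * lp r (- 2*y/real(2*m+1)))"

lemma denom_pos:
  fixes y :: real assumes "\<bar>y\<bar> < 1/2"
  shows "4*y^2 < (real(2*m+1))^2"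
proof -
  have "1 \<le> (real(2*m+1))^2" by simp
  thus ?thesis using four_sq_less[OF assms] by linarith
qed

lemma ln_deriv_aux:
  fixes y N :: real assumes N: "N > 0" and d: "4*y^2 < N^2"
  shows "((\<lambda>y. ln (1 - 4*y^2/N^2)) has_real_derivative -8*y/(N^2 - 4*y^2)) (at y)"
proof -
  have p: "0 < 1 - 4*y^2/N^2" using d N by (simp add: field_simps)
  have i: "((\<lambda>y. 1 - 4*y^2/N^2) has_real_derivative -(8*y)/N^2) (at y)"
    using N by (auto intro!: derivative_eq_intros simp: field_simps eval_nat_numeral)
  have "((\<lambda>y. ln (1 - 4*y^2/N^2)) has_real_derivative (1/(1 - 4*y^2/N^2)) * (-(8*y)/N^2)) (at y)"
    by (rule DERIV_chain2[OF DERIV_ln_divide[OF p] i])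
  also have "(1/(1 - 4*y^2/N^2)) * (-(8*y)/N^2) = -8*y/(N^2 - 4*y^2)"
    using p N d by (simp add: field_simps)
  finally show ?thesis .
qed

lemma ell_deriv:
  fixes y :: real assumes "\<bar>y\<bar> < 1/2"
  shows "(ell m has_real_derivative ell' m y) (at y)"
  unfolding ell_def[abs_def] ell'_def
  by (rule ln_deriv_aux[OF _ denom_pos[OF assms]]) simp

lemma ct_algebra0:
  fixes w q :: real and k :: nat
  assumes q: "q > 0" and w1: "1 - w > 0" and w2: "1 + w > 0"
  shows "q^k * (- (w^Suc k) / (1 - w) * (1/q) + (-1)^k * (- ((-w)^Suc k) / (1 - (-w)) * (-(1/q))))
     = q^k * w^Suc k * (1/q) * (- 1/(1 - w) - 1/(1 + w))"
proof -
  have e1: "(-1::real)^k * (-w)^k = w^k" using power_mult_distrib[of "-1::real" "-w" k] by simp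
  have A: "(-1::real)^k * (-w)^Suc k = - (w^Suc k)"
  proof -
    have "(-1::real)^k * (-w)^Suc k = -w * ((-1)^k * (-w)^k)" by (simp only: power_Suc) (simp only: mult_ac)
    also have "\<dots> = -w * w^k" by (simp only: e1)
    finally show ?thesis by simp
  qed
  have "(-1)^k * (- ((-w)^Suc k) / (1 - (-w)) * (-(1/q))) = ((-1)^k * (-w)^Suc k) / (1 + w) * (1/q)"
    by simp
  also have "\<dots> = - (w^Suc k) / (1 + w) * (1/q)" by (simp only: A)
  finally have C: "(-1)^k * (- ((-w)^Suc k) / (1 - (-w)) * (-(1/q))) = - (w^Suc k) / (1 + w) * (1/q)" .
  show ?thesis unfolding C divide_inverse using e1 by (simp add: algebra_simps)
qed

lemma ct_algebra:
  fixes y n :: real and k :: nat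
  assumes n: "n > 0" and yn: "\<bar>y\<bar> < n/2"
  shows "(n/2)^k * (- ((2*y/n)^Suc k) / (1 - 2*y/n) * (2/n) + (-1)^k * (- ((- 2*y/n)^Suc k) / (1 - (- 2*y/n)) * (- 2/n)))
     = y^k * (-8*y/(n^2 - 4*y^2))"
proof -
  define q where "q = n/2"
  define w where "w = y/q"
  have q: "q > 0" using n q_def by simp
  have e: "2*y/n = w" "- 2*y/n = -w" "2/n = 1/q" "- 2/n = -(1/q)" "n = 2*q"
    using n by (auto simp: q_def w_def field_simps)
  have yq: "\<bar>y\<bar> < q" using yn q_def by simp
  have w1: "1 - w > 0" and w2: "1 + w > 0" using yq q by (auto simp: w_def field_simps abs_less_iff)
  have n2: "(2*q)^2 - 4*y^2 > 0"
  proof -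
    have "y^2 < q^2" using yq q by (metis abs_of_pos abs_le_square_iff not_le power2_abs abs_square_less_1 less_le)
    thus ?thesis by (simp add: power_mult_distrib)
  qed
  have B: "q^k * w^Suc k = y^Suc k / q"
    using q by (simp add: w_def power_divide field_simps)
  have "(n/2)^k * (- ((2*y/n)^Suc k) / (1 - 2*y/n) * (2/n) + (-1)^k * (- ((- 2*y/n)^Suc k) / (1 - (- 2*y/n)) * (- 2/n)))
      = q^k * (- (w^Suc k) / (1 - w) * (1/q) + (-1)^k * (- ((-w)^Suc k) / (1 - (-w)) * (-(1/q))))"
    unfolding e(1-4) q_def[symmetric] ..
  also have "\<dots> = q^k * w^Suc k * (1/q) * (- 1/(1 - w) - 1/(1 + w))"
    by (rule ct_algebra0[OF q w1 w2])
  also have "\<dots> = y^Suc k / q * (1/q) * (- 1/(1 - w) - 1/(1 + w))" by (simp only: B)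
  also have "\<dots> = y^k * (-8*y/((2*q)^2 - 4*y^2))"
    using w1 w2 n2 q by (simp add: w_def field_simps power2_eq_square)
  finally show ?thesis unfolding e(5) .
qed

lemma ct_deriv:
  fixes y :: real
  assumes y: "\<bar>y\<bar> < 1/2" and r: "r \<ge> 1"
  shows "(ct r m has_real_derivative y^(r-1) * ell' m y) (at y)"
proof -
  define n where "n = real(2*m+1)"
  have n1: "n \<ge> 1" unfolding n_def by simp
  hence n: "n > 0" "\<bar>y\<bar> < n/2" using y by auto
  have d1: "((\<lambda>y. 2*y/n) has_real_derivative 2/n) (at y)" using n(1) by (auto intro!: derivative_eq_intros)
  have d2: "((\<lambda>y. - 2*y/n) has_real_derivative - 2/n) (at y)" using n(1) by (auto intro!: derivative_eq_intros)
  have u: "2*y/n < 1" "- 2*y/n < 1" using n by (auto simp: field_simps abs_less_iff)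
  obtain k where rk: "r = Suc k" using r by (cases r) auto
  have "(ct r m has_real_derivative (n/2)^k * (- ((2*y/n)^Suc k) / (1 - 2*y/n) * (2/n) + (-1)^k * (- ((- 2*y/n)^Suc k) / (1 - (- 2*y/n)) * (- 2/n)))) (at y)"
    unfolding ct_def[abs_def] n_def[symmetric] rk diff_Suc_1
    by (intro DERIV_cmult DERIV_add lp_deriv_chain[OF d1 u(1)] lp_deriv_chain[OF d2 u(2)])
  also have "(n/2)^k * (- ((2*y/n)^Suc k) / (1 - 2*y/n) * (2/n) + (-1)^k * (- ((- 2*y/n)^Suc k) / (1 - (- 2*y/n)) * (- 2/n)))
     = y^k * (-8*y/(n^2 - 4*y^2))" by (rule ct_algebra[OF n])
  finally show ?thesis unfolding ell'_def n_def rk by simp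
qed

lemma ell'_bound:
  fixes a y :: real
  assumes a: "0 \<le> a" "a < 1/2" and y: "y \<in> {0..a}"
  shows "\<bar>ell' m y\<bar> \<le> (8*a/(1-4*a^2)) * inverse (real (Suc m) ^ 2)"
proof -
  define n where "n = real(2*m+1)"
  have n1: "n \<ge> real (Suc m)" unfolding n_def by simp
  have sm: "real (Suc m) \<ge> 1" by simp
  have aa: "4*a^2 < 1" using four_sq_less[of a] a by simp
  have yy: "y^2 \<le> a^2" using y by (auto intro: power_mono)
  have nn: "real (Suc m)^2 \<le> n^2" using n1 sm by (intro power_mono) auto
  have n2: "1 \<le> real (Suc m)^2" using sm by simp
  have den: "real (Suc m)^2 * (1 - 4*a^2) \<le> n^2 - 4*y^2"
  proof -
    have "real (Suc m)^2 * (1 - 4*a^2) \<le> n^2 * (1 - 4*a^2)" using nn aa by (intro mult_right_mono) auto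
    also have "\<dots> = n^2 - 4*a^2*n^2" by (simp add: algebra_simps)
    also have "\<dots> \<le> n^2 - 4*y^2"
    proof -
      have "4*y^2 \<le> 4*a^2" using yy by simp
      also have "4*a^2*1 \<le> 4*a^2*n^2" using order_trans[OF n2 nn] by (intro mult_left_mono) auto
      finally show ?thesis by simp
    qed
    finally show ?thesis .
  qed
  have dpos: "0 < real (Suc m)^2 * (1 - 4*a^2)" using aa by simp
  have "\<bar>ell' m y\<bar> = 8*y/(n^2 - 4*y^2)"
    using den dpos y unfolding ell'_def n_def[symmetric] by (simp add: abs_div)
  also have "\<dots> \<le> 8*a/(real (Suc m)^2 * (1 - 4*a^2))"
    using den dpos y by (intro frac_le) auto
  also have "\<dots> = (8*a/(1-4*a^2)) * inverse (real (Suc m) ^ 2)"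
    by (simp add: field_simps)
  finally show ?thesis .
qed

lemma summable_inv_Suc_sq: "summable (\<lambda>m. c * inverse (real (Suc m) ^ 2))"
proof -
  have "summable (\<lambda>m. inverse (real m ^ 2))" using inverse_power_summable[of 2] by simp
  hence "summable (\<lambda>m. inverse (real (Suc m) ^ 2))" by (subst summable_Suc_iff)
  thus ?thesis by (rule summable_mult)
qed

lemma L_series:
  fixes a :: real assumes a: "0 \<le> a" "a < 1/2"
  shows "\<exists>g. \<forall>y\<in>{0..a}. (\<lambda>m. ell m y) sums g y \<and>
           (g has_real_derivative (\<Sum>m. ell' m y)) (at y within {0..a})"
proof (rule has_field_derivative_series[of "{0..a}" ell ell' _ 0])
  show "uniform_limit {0..a} (\<lambda>n y. \<Sum>i<n. ell' i y) (\<lambda>y. \<Sum>i. ell' i y) sequentially"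
    by (rule Weierstrass_m_test[OF _ summable_inv_Suc_sq[of "8*a/(1-4*a^2)"]])
       (unfold real_norm_def, rule ell'_bound[OF a], assumption)
  fix n and y :: real assume "y \<in> {0..a}"
  hence "\<bar>y\<bar> < 1/2" using a by auto
  thus "(ell n has_real_derivative ell' n y) (at y within {0..a})"
    by (rule has_field_derivative_at_within[OF ell_deriv])
next
  show "(0::real) \<in> {0..a}" using a by simp
  show "summable (\<lambda>n. ell n 0)" by (simp add: ell_def)
qed (rule convex_real_interval)

lemma lp_zero: "lp r 0 = 0"
proof -
  have "(\<Sum>k=1..r. (0::real)^k / real k) = 0"
    by (intro sum.neutral ballI) auto
  thus ?thesis unfolding lp_def by simp
qed

lemma ct_zero: "ct r n 0 = 0"
  unfolding ct_def using lp_zero by (simp only: mult_zero_right div_0 add_0)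

lemma C_bound:
  fixes a :: real assumes a: "0 \<le> a" "a < 1/2" and that: "y \<in> {0..a}"
  shows "\<bar>y^(r-1) * ell' m y\<bar> \<le> (a^(r-1) * (8*a/(1-4*a^2))) * inverse (real (Suc m) ^ 2)"
proof -
  have y0: "0 \<le> y" "y \<le> a" using that by auto
  have "\<bar>y^(r-1)\<bar> \<le> a^(r-1)" unfolding power_abs using y0 by (simp add: power_mono)
  hence "\<bar>y^(r-1)\<bar> * \<bar>ell' m y\<bar> \<le> a^(r-1) * ((8*a/(1-4*a^2)) * inverse (real (Suc m) ^ 2))"
    using ell'_bound[OF a that, of m] y0 by (intro mult_mono) simp_all
  hence "\<bar>y^(r-1) * ell' m y\<bar> \<le> a^(r-1) * ((8*a/(1-4*a^2)) * inverse (real (Suc m) ^ 2))"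
    by (simp only: abs_mult)
  thus ?thesis by (simp only: mult.assoc)
qed

lemma C_series:
  fixes a :: real assumes a: "0 \<le> a" "a < 1/2" and r: "r \<ge> 1"
  shows "\<exists>g. \<forall>y\<in>{0..a}. (\<lambda>m. ct r m y) sums g y \<and>
           (g has_real_derivative (\<Sum>m. y^(r-1) * ell' m y)) (at y within {0..a})"
proof (rule has_field_derivative_series[of "{0..a}" "ct r" "\<lambda>m y. y^(r-1) * ell' m y" _ 0])
  show "convex {0..a::real}" by (rule convex_real_interval)
  show "uniform_limit {0..a} (\<lambda>n y. \<Sum>i<n. y^(r-1) * ell' i y) (\<lambda>y. \<Sum>i. y^(r-1) * ell' i y) sequentially"
    by (rule Weierstrass_m_test[OF _ summable_inv_Suc_sq[of "a^(r-1) * (8*a/(1-4*a^2))"]])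
       (unfold real_norm_def, rule C_bound[OF a], assumption)
  show "(ct r n has_real_derivative y^(r-1) * ell' n y) (at y within {0..a})" if "y \<in> {0..a}" for n y
  proof -
    have "\<bar>y\<bar> < 1/2" using a that by auto
    thus ?thesis by (rule has_field_derivative_at_within[OF ct_deriv[OF _ r]])
  qed
  show "(0::real) \<in> {0..a}" using a by simp
  show "summable (\<lambda>n. ct r n 0)" by (simp only: ct_zero summable_zero)
qed

lemma LogP_of_real:
  assumes "u < 1"
  shows "LogP r (complex_of_real u) = complex_of_real (lp r u)"
proof -
  have "1 - complex_of_real u = complex_of_real (1-u)" by simp
  hence "Ln (1 - complex_of_real u) = complex_of_real (ln (1-u))"
    using Ln_of_real[of "1-u"] assms by simp
  thus ?thesis by (simp add: LogP_def lp_def)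
qed

lemma logC_of_real:
  fixes a :: real
  assumes a: "0 \<le> a" "a < 1/2" and s: "(\<lambda>m. ct r m a) sums c"
  shows "logC r (complex_of_real a) = complex_of_real c"
proof -
  have t: "(of_nat (2*m+1) / 2) ^ (r - 1) *
      (LogP r (2 * complex_of_real a / of_nat (2*m+1)) + (-1) ^ (r - 1) * LogP r (- 2 * complex_of_real a / of_nat (2*m+1)))
      = complex_of_real (ct r m a)" for m
  proof -
    have n: "real (2*m+1) \<ge> 1" by simp
    have u1: "2*a/real(2*m+1) < 1"
    proof -
      have "2*a/real(2*m+1) \<le> 2*a" using n a by (simp add: divide_le_eq mult_le_cancel_left1 mult_left_mono)
      thus ?thesis using a by simp
    qed
    have u2: "- 2*a/real(2*m+1) < 1"
    proof -
      have "0 \<le> 2*a/real(2*m+1)" using a by simp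
      moreover have "- 2*a/real(2*m+1) = -(2*a/real(2*m+1))" by simp
      ultimately show ?thesis by linarith
    qed
    have e1: "2 * complex_of_real a / of_nat (2*m+1) = complex_of_real (2*a/real(2*m+1))" by simp
    have e2: "- 2 * complex_of_real a / of_nat (2*m+1) = complex_of_real (- 2*a/real(2*m+1))" by simp
    show ?thesis unfolding e1 e2 LogP_of_real[OF u1] LogP_of_real[OF u2] ct_def by simp
  qed
  have "(\<lambda>m. complex_of_real (ct r m a)) sums complex_of_real c" using s by (simp only: sums_of_real_iff)
  hence "(\<lambda>m. (of_nat (2*m+1) / 2) ^ (r - 1) *
      (LogP r (2 * complex_of_real a / of_nat (2*m+1)) + (-1) ^ (r - 1) * LogP r (- 2 * complex_of_real a / of_nat (2*m+1))))
      sums complex_of_real c" unfolding t .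
  thus ?thesis unfolding logC_def by (rule sums_unique[symmetric])
qed

lemma chain_half:
  fixes G :: "real \<Rightarrow> real" and a x t :: real
  assumes a: "a = x/(2*pi)" and t: "t \<in> {0..x}"
    and G: "(G has_real_derivative D) (at (t/(2*pi)) within {0..a})"
  shows "((\<lambda>t. G (t/(2*pi))) has_real_derivative D * (1/(2*pi))) (at t within {0..x})"
proof -
  have sub: "(\<lambda>t. t/(2*pi)) ` {0..x} \<subseteq> {0..a}"
    using a by (auto simp: divide_right_mono)
  have dh: "((\<lambda>t. t/(2*pi)) has_real_derivative 1/(2*pi)) (at t within {0..x})"
    by (auto intro!: derivative_eq_intros)
  have "(G \<circ> (\<lambda>t. t/(2*pi)) has_real_derivative D * (1/(2*pi))) (at t within {0..x})"
    by (rule DERIV_image_chain[OF has_field_derivative_subset[OF G sub] dh])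
  thus ?thesis by (simp add: o_def)
qed

theorem theorem2p1:
  fixes r :: nat and x :: real
  assumes "r \<ge> 2" and "0 \<le> x" and "x < pi"
  shows "complex_of_real (integral {0..x} (\<lambda>\<theta>. \<theta> ^ (r - 2) * ln (cos (\<theta> / 2))))
    = complex_of_real (x ^ (r - 1) / real (r - 1) * ln (cos (x / 2)))
      - complex_of_real ((2 * pi) ^ (r - 1) / real (r - 1)) * logC r (complex_of_real (x / (2 * pi)))"
proof -
  note r2 = assms(1) and x0 = assms(2) and xpi = assms(3)
  have r1: "r \<ge> 1" using r2 by simp
  define a where "a = x/(2*pi)"
  have a: "0 \<le> a" "a < 1/2" using x0 xpi by (auto simp: a_def field_simps)
  obtain gL where gL: "\<And>y. y\<in>{0..a} \<Longrightarrow> (\<lambda>m. ell m y) sums gL y \<and>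
           (gL has_real_derivative (\<Sum>m. ell' m y)) (at y within {0..a})"
    using L_series[OF a] by blast
  obtain gC where gC: "\<And>y. y\<in>{0..a} \<Longrightarrow> (\<lambda>m. ct r m y) sums gC y \<and>
           (gC has_real_derivative (\<Sum>m. y^(r-1) * ell' m y)) (at y within {0..a})"
    using C_series[OF a r1] by blast
  have gL_eq: "gL y = ln (cos (pi*y))" if "y \<in> {0..a}" for y
  proof -
    have "\<bar>y\<bar> < 1/2" using that a by auto
    from ln_cos_sums[OF this] have "(\<lambda>m. ell m y) sums ln (cos (pi*y))" by (simp add: ell_def)
    thus ?thesis using gL[OF that] sums_unique2 by blast
  qed
  have sumL: "summable (\<lambda>m. ell' m y)" if "y \<in> {0..a}" for y
    by (rule summable_comparison_test[OF _ summable_inv_Suc_sq[of "8*a/(1-4*a^2)"]])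
       (use ell'_bound[OF a that] in auto)
  define F where "F t = t^(r-1)/real(r-1) * gL (t/(2*pi)) - (2*pi)^(r-1)/real(r-1) * gC (t/(2*pi))" for t
  have dF: "(F has_real_derivative t^(r-2) * gL (t/(2*pi))) (at t within {0..x})" if t: "t \<in> {0..x}" for t
  proof -
    define y where "y = t/(2*pi)"
    have y: "y \<in> {0..a}" using t by (auto simp: y_def a_def divide_right_mono)
    define DL where "DL = (\<Sum>m. ell' m y)"
    have DC: "(\<Sum>m. y^(r-1) * ell' m y) = y^(r-1) * DL"
      unfolding DL_def by (rule suminf_mult[OF sumL[OF y]])
    have d1: "((\<lambda>t. gL (t/(2*pi))) has_real_derivative DL * (1/(2*pi))) (at t within {0..x})"
      by (rule chain_half[OF a_def t]) (use gL[OF y] in \<open>simp add: y_def DL_def\<close>)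
    have d2: "((\<lambda>t. gC (t/(2*pi))) has_real_derivative y^(r-1) * DL * (1/(2*pi))) (at t within {0..x})"
      by (rule chain_half[OF a_def t]) (use gC[OF y] DC in \<open>simp add: y_def\<close>)
    have rr: "r - 1 = Suc (r - 2)" using r2 by simp
    have d0: "((\<lambda>t. t^(r-1)/real(r-1)) has_real_derivative t^(r-2)) (at t within {0..x})"
    proof -
      have "((\<lambda>t. t^(r-1)) has_real_derivative real (r-1) * t^(r-1 - Suc 0)) (at t within {0..x})"
        by (rule DERIV_pow)
      hence "((\<lambda>t. t^(r-1)/real(r-1)) has_real_derivative real (r-1) * t^(r-1 - Suc 0) / real (r-1)) (at t within {0..x})"
        by (rule DERIV_cdivide)
      moreover have "real (r-1) * t^(r-1 - Suc 0) / real (r-1) = t^(r-2)"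
      proof -
        have e: "r - 1 - Suc 0 = r - 2" by simp
        have nz: "real (r-1) \<noteq> 0" using r2 by simp
        show ?thesis unfolding e using nz by simp
      qed
      ultimately show ?thesis by (simp only:)
    qed
    have "(F has_real_derivative (t^(r-2) * gL (t/(2*pi)) + DL * (1/(2*pi)) * (t^(r-1)/real(r-1)))
        - (2*pi)^(r-1)/real(r-1) * (y^(r-1) * DL * (1/(2*pi)))) (at t within {0..x})"
      unfolding F_def[abs_def] by (intro DERIV_diff DERIV_mult d0 d1 DERIV_cmult d2)
    also have "(t^(r-2) * gL (t/(2*pi)) + DL * (1/(2*pi)) * (t^(r-1)/real(r-1)))
        - (2*pi)^(r-1)/real(r-1) * (y^(r-1) * DL * (1/(2*pi))) = t^(r-2) * gL (t/(2*pi))"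
    proof -
      have "(2*pi)^(r-1) * y^(r-1) = t^(r-1)"
        unfolding y_def by (simp add: power_divide)
      hence "(2*pi)^(r-1)/real(r-1) * (y^(r-1) * DL * (1/(2*pi))) = DL * (1/(2*pi)) * (t^(r-1)/real(r-1))"
        by (simp add: field_simps)
      thus ?thesis by simp
    qed
    finally show ?thesis .
  qed
  have "((\<lambda>t. t^(r-2) * gL (t/(2*pi))) has_integral F x - F 0) {0..x}"
    by (rule fundamental_theorem_of_calculus[OF x0])
       (use dF in \<open>simp add: has_real_derivative_iff_has_vector_derivative[symmetric]\<close>)
  moreover have "t^(r-2) * gL (t/(2*pi)) = t^(r-2) * ln (cos (t/2))" if "t \<in> {0..x}" for t
  proof -
    have "t/(2*pi) \<in> {0..a}" using that by (auto simp: a_def divide_right_mono)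
    thus ?thesis using gL_eq by simp
  qed
  ultimately have I: "((\<lambda>t. t^(r-2) * ln (cos (t/2))) has_integral F x - F 0) {0..x}"
    using has_integral_cong by (metis (no_types, lifting))
  have gC0: "gC 0 = 0"
  proof -
    have "(\<lambda>m. ct r m 0) sums gC 0" using gC[of 0] a by simp
    moreover have "(\<lambda>m. ct r m 0) sums 0" by (simp only: ct_zero sums_zero)
    ultimately show ?thesis by (rule sums_unique2)
  qed
  have F0: "F 0 = 0" using r2 gC0 by (simp add: F_def)
  have ax: "a \<in> {0..a}" using a by simp
  have Fx: "F x = x^(r-1)/real(r-1) * ln (cos (x/2)) - (2*pi)^(r-1)/real(r-1) * gC a"
  proof -
    have e: "cos (x/2) = cos (pi * a)" by (simp add: a_def)
    show ?thesis unfolding e F_def a_def[symmetric] gL_eq[OF ax] ..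
  qed
  have lc: "logC r (complex_of_real a) = complex_of_real (gC a)"
    by (rule logC_of_real[OF a]) (use gC[OF ax] in simp)
  have "integral {0..x} (\<lambda>\<theta>. \<theta> ^ (r - 2) * ln (cos (\<theta> / 2))) = F x"
    using integral_unique[OF I] F0 by simp
  thus ?thesis unfolding a_def[symmetric] lc Fx by simp
qed

end
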